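(* Let $n\geqslant 2$. For any integers $p_1,p_2$ with $2 \leqslant p_1 < p_2$ and any $\varepsilon \in (0,1)$, $\mathcal Y(\varepsilon,p_2) \subset \mathcal Y(\varepsilon,p_1)$ (proper inclusion).
   Context: For $\bm x \in \mathbb{R}^n_{\geqslant 0}$ and $p\geqslant 1$, $\|\bm x\|_p = (\sum_{i=1}^n x_i^p)^{1/p}$. Define $D_p = n^{1-1/p}-1$. Let $\Delta_n = \{\bm x \in \mathbb{R}^n_{\geqslant 0} : \sum_{i=1}^n x_i = 1\}$, and for $\varepsilon\in[0,1]$ and integer $p\geqslant 2$ let $\mathcal Y(\varepsilon,p) = \{\bm x \in \Delta_n : (1+\varepsilon D_p)\|\bm x\|_p \leqslant 1\}$. *)

theory Defs
  imports "HOL-Analysis.Analysis"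
begin

definition pnorm :: "nat \<Rightarrow> real^'n \<Rightarrow> real" where
  "pnorm p x = (\<Sum>i\<in>UNIV. (x $ i) ^ p) powr (1 / real p)"

definition Dp :: "'n::finite itself \<Rightarrow> nat \<Rightarrow> real" where
  "Dp _ p = real CARD('n) powr (1 - 1 / real p) - 1"

definition prob_simplex :: "(real^'n::finite) set" where
  "prob_simplex = {x. (\<forall>i. x $ i \<ge> 0) \<and> (\<Sum>i\<in>UNIV. x $ i) = 1}"

definition Yset :: "real \<Rightarrow> nat \<Rightarrow> (real^'n::finite) set" where
  "Yset \<epsilon> p = {x \<in> prob_simplex. (1 + \<epsilon> * Dp TYPE('n) p) * pnorm p x \<le> 1}"

end

theory Submission
  imports Defs
begin

lemma young_le:
  fixes t q :: real
  assumes "0 \<le> t" "0 \<le> q" "q \<le> 1"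
  shows "t powr q \<le> 1 + q * (t - 1)"
proof (cases "t = 0")
  case True then show ?thesis using assms by simp
next
  case False
  then have "t powr q * 1 powr (1 - q) \<le> q * t + (1 - q) * 1"
    using Youngs_inequality_0[of q "1 - q" t 1] assms by simp
  then show ?thesis by (simp add: algebra_simps)
qed

lemma young_less:
  fixes t q :: real
  assumes "0 < t" "t \<noteq> 1" "0 < q" "q < 1"
  shows "t powr q < 1 + q * (t - 1)"
proof -
  define u where "u = sqrt t"
  have u: "0 < u" "u \<noteq> 1" "t = u * u" using assms by (auto simp: u_def)
  have tq: "t powr q = (u powr q) * (u powr q)" using u by (simp add: powr_mult)
  have le: "u powr q \<le> 1 + q * (u - 1)" using young_le[of u q] u assms by simp
  have "(u powr q) * (u powr q) \<le> (1 + q * (u - 1)) * (1 + q * (u - 1))"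
  proof -
    have "0 < q * u" using u assms by simp
    then have "0 \<le> 1 + q * (u - 1)" using assms by (simp add: algebra_simps)
    then show ?thesis using le by (intro mult_mono) auto
  qed
  also have "\<dots> < 1 + q * (u * u - 1)"
  proof -
    have "0 < (u - 1)\<^sup>2" using u by simp
    moreover have "0 < q * (1 - q)" using assms by simp
    ultimately have "0 < q * (1 - q) * ((u - 1) * (u - 1))"
      using mult_pos_pos by (auto simp: power2_eq_square)
    then show ?thesis by (simp add: algebra_simps)
  qed
  finally show ?thesis using tq u by simp
qed

lemma jensen_powr:
  fixes w y :: "'a \<Rightarrow> real"
  assumes "finite I" "\<And>i. i \<in> I \<Longrightarrow> 0 \<le> w i" "sum w I = 1"
    "\<And>i. i \<in> I \<Longrightarrow> 0 \<le> y i" "0 \<le> r" "r \<le> 1"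
  shows "(\<Sum>i\<in>I. w i * y i powr r) \<le> (\<Sum>i\<in>I. w i * y i) powr r"
proof -
  define M where "M = (\<Sum>i\<in>I. w i * y i)"
  have M0: "0 \<le> M" unfolding M_def using assms by (auto intro: sum_nonneg)
  show ?thesis
  proof (cases "M = 0")
    case True
    then have "\<forall>i\<in>I. w i * y i = 0"
      using assms sum_nonneg_eq_0_iff[of I "\<lambda>i. w i * y i"] unfolding M_def by auto
    then have "(\<Sum>i\<in>I. w i * y i powr r) = 0" by (intro sum.neutral) auto
    then show ?thesis by simp
  next
    case False
    then have Mp: "0 < M" using M0 by simp
    have "(\<Sum>i\<in>I. w i * y i powr r) \<le> (\<Sum>i\<in>I. w i * (M powr r * (1 + r * (y i / M - 1))))"
    proof (intro sum_mono mult_left_mono)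
      fix i assume i: "i \<in> I"
      have "y i powr r = M powr r * (y i / M) powr r"
        using Mp assms(4)[OF i] by (simp add: powr_divide)
      also have "\<dots> \<le> M powr r * (1 + r * (y i / M - 1))"
        using young_le[of "y i / M" r] assms(4)[OF i] assms Mp by (intro mult_left_mono) auto
      finally show "y i powr r \<le> M powr r * (1 + r * (y i / M - 1))" .
    qed (use assms in auto)
    also have "\<dots> = (\<Sum>i\<in>I. (M powr r * (1 - r)) * w i + (M powr r * r / M) * (w i * y i))"
      by (intro sum.cong) (auto simp: algebra_simps diff_divide_distrib)
    also have "\<dots> = M powr r * ((1 - r) * (\<Sum>i\<in>I. w i) + r / M * (\<Sum>i\<in>I. w i * y i))"
    proof -
      define c where "c = M powr r * (1 - r)"
      define d where "d = M powr r * r / M"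
      have "(\<Sum>i\<in>I. c * w i + d * (w i * y i)) = c * (\<Sum>i\<in>I. w i) + d * (\<Sum>i\<in>I. w i * y i)"
        by (simp add: sum.distrib sum_distrib_left)
      then show ?thesis unfolding c_def d_def by (simp add: algebra_simps)
    qed
    also have "\<dots> = M powr r" using assms Mp unfolding M_def[symmetric] by simp
    finally show ?thesis unfolding M_def .
  qed
qed


lemma norm_interp:
  fixes x :: "real^'n::finite"
  assumes "x \<in> prob_simplex" "2 \<le> p1" "p1 < p2"
  shows "pnorm p1 x \<le> (pnorm p2 x) powr ((real p1 - 1) * real p2 / (real p1 * (real p2 - 1)))"
proof -
  define r where "r = (real p1 - 1) / (real p2 - 1)"
  have r: "0 \<le> r" "r \<le> 1" using assms unfolding r_def by auto
  have x0: "\<And>i. 0 \<le> x $ i" and xs: "(\<Sum>i\<in>UNIV. x $ i) = 1"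
    using assms(1) unfolding prob_simplex_def by auto
  have J: "(\<Sum>i\<in>UNIV. x $ i * (x $ i ^ (p2 - 1)) powr r) \<le> (\<Sum>i\<in>UNIV. x $ i * x $ i ^ (p2 - 1)) powr r"
    using x0 xs r by (intro jensen_powr) auto
  have t1: "x $ i * (x $ i ^ (p2 - 1)) powr r = x $ i ^ p1" for i
  proof (cases "x $ i = 0")
    case True then show ?thesis using assms by simp
  next
    case False
    then have pos: "0 < x $ i" using x0[of i] by simp
    have "(x $ i ^ (p2 - 1)) powr r = (x $ i powr real (p2 - 1)) powr r"
      using pos by (simp add: powr_realpow)
    also have "\<dots> = x $ i powr (real (p2 - 1) * r)" by (simp add: powr_powr)
    also have "real (p2 - 1) * r = real (p1 - 1)" using assms unfolding r_def by (simp add: of_nat_diff)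
    also have "x $ i powr real (p1 - 1) = x $ i ^ (p1 - 1)" using pos by (simp add: powr_realpow)
    finally have "x $ i * (x $ i ^ (p2 - 1)) powr r = x $ i * x $ i ^ (p1 - 1)" by simp
    also have "\<dots> = x $ i ^ p1" using assms by (cases p1) auto
    finally show ?thesis .
  qed
  have t2: "x $ i * x $ i ^ (p2 - 1) = x $ i ^ p2" for i
    using assms by (cases p2) auto
  have S: "(\<Sum>i\<in>UNIV. x $ i ^ p1) \<le> (\<Sum>i\<in>UNIV. x $ i ^ p2) powr r"
    using J t1 t2 by simp
  have S1: "0 \<le> (\<Sum>i\<in>UNIV. x $ i ^ p1)" using x0 by (intro sum_nonneg) simp
  have "pnorm p1 x \<le> ((\<Sum>i\<in>UNIV. x $ i ^ p2) powr r) powr (1 / real p1)"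
    unfolding pnorm_def using S S1 by (intro powr_mono2) auto
  also have "\<dots> = (\<Sum>i\<in>UNIV. x $ i ^ p2) powr (r * (1 / real p1))" by (simp add: powr_powr)
  also have "r * (1 / real p1) = 1 / real p2 * ((real p1 - 1) * real p2 / (real p1 * (real p2 - 1)))"
    using assms unfolding r_def by (simp add: field_simps)
  also have "(\<Sum>i\<in>UNIV. x $ i ^ p2) powr \<dots> = (pnorm p2 x) powr ((real p1 - 1) * real p2 / (real p1 * (real p2 - 1)))"
    unfolding pnorm_def by (simp add: powr_powr)
  finally show ?thesis .
qed

theorem theorem2:
  fixes p1 p2 :: nat and \<epsilon> :: real
  assumes "CARD('n::finite) \<ge> 2"
    and "2 \<le> p1" and "p1 < p2"
    and "0 < \<epsilon>" and "\<epsilon> < 1"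
  shows "(Yset \<epsilon> p2 :: (real^'n) set) \<subset> Yset \<epsilon> p1"
proof -
  define d where "d = real CARD('n)"
  define s1 where "s1 = 1 - 1 / real p1"
  define s2 where "s2 = 1 - 1 / real p2"
  define q where "q = (real p1 - 1) * real p2 / (real p1 * (real p2 - 1))"
  define A1 where "A1 = 1 + \<epsilon> * Dp TYPE('n) p1"
  define A2 where "A2 = 1 + \<epsilon> * Dp TYPE('n) p2"
  define b where "b = d powr s2"
  have d: "2 \<le> d" using assms(1) unfolding d_def by simp
  have p1: "2 \<le> real p1" and p12: "real p1 < real p2" using assms by auto
  have q: "0 < q" "q < 1" unfolding q_def using p1 p12 by (auto simp: field_simps)
  have s1: "0 < s1" and s2: "0 < s2" unfolding s1_def s2_def using p1 p12 by auto
  have qs: "s2 * q = s1" unfolding s1_def s2_def q_def using p1 p12 by (simp add: field_simps)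
  have b1: "1 < b" unfolding b_def using d s2 by simp
  have bq: "b powr q = d powr s1" unfolding b_def using d by (simp add: powr_powr qs)
  have A1d: "A1 = 1 - \<epsilon> + \<epsilon> * d powr s1" unfolding A1_def Dp_def d_def s1_def by (simp add: algebra_simps)
  have A2d: "A2 = 1 - \<epsilon> + \<epsilon> * b" unfolding A2_def Dp_def d_def s2_def b_def by (simp add: algebra_simps)
  have ds1: "1 < d powr s1" using d s1 by simp
  have h1: "0 \<le> \<epsilon> * (d powr s1 - 1)" "0 \<le> (1 - \<epsilon>) * (d powr s1 - 1)"
    using ds1 assms by simp_all
  have h2: "0 < \<epsilon> * (b - 1)" "0 < (1 - \<epsilon>) * (b - 1)" using b1 assms by simp_all
  have A1ge: "1 \<le> A1" using A1d h1 by (simp add: algebra_simps)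
  have A1le: "A1 \<le> d powr s1" using A1d h1 by (simp add: algebra_simps)
  have A2gt: "1 < A2" "A2 < b" using A2d h2 by (simp_all add: algebra_simps)
  have key: "A1 < A2 powr q"
  proof -
    define m where "m = A2"
    have m: "0 < m" using A2gt unfolding m_def by simp
    have y1: "(1 / m) powr q \<le> 1 + q * (1 / m - 1)"
      using young_le[of "1/m" q] m q by simp
    have y2: "(b / m) powr q < 1 + q * (b / m - 1)"
      using young_less[of "b/m" q] m q A2gt b1 unfolding m_def by simp
    have "(1 - \<epsilon>) * (1 / m) powr q + \<epsilon> * (b / m) powr q
          < (1 - \<epsilon>) * (1 + q * (1 / m - 1)) + \<epsilon> * (1 + q * (b / m - 1))"
      using y1 y2 assms by (intro add_le_less_mono mult_left_mono mult_strict_left_mono) auto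
    also have "\<dots> = 1 + q * (((1 - \<epsilon>) + \<epsilon> * b) / m - 1)" using m by (simp add: field_simps)
    also have "\<dots> = 1" using A2d m unfolding m_def by simp
    finally have "(1 - \<epsilon>) * (1 / m) powr q + \<epsilon> * (b / m) powr q < 1" .
    moreover have "(1 - \<epsilon>) * (1 / m) powr q + \<epsilon> * (b / m) powr q = ((1 - \<epsilon>) + \<epsilon> * b powr q) / m powr q"
      using m b1 by (simp add: powr_divide field_simps)
    ultimately have "((1 - \<epsilon>) + \<epsilon> * b powr q) / m powr q < 1" by simp
    then have "(1 - \<epsilon>) + \<epsilon> * b powr q < m powr q" using m by (simp add: divide_less_eq)
    then show ?thesis using A1d bq unfolding m_def by simp
  qed
  have A1pos: "0 < A1" "0 < A2" using A1ge A2gt by auto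
  have sub: "Yset \<epsilon> p2 \<subseteq> (Yset \<epsilon> p1 :: (real^'n) set)"
  proof
    fix x :: "real^'n" assume "x \<in> Yset \<epsilon> p2"
    then have xs: "x \<in> prob_simplex" and x2: "A2 * pnorm p2 x \<le> 1"
      unfolding Yset_def A2_def by auto
    have N2: "0 \<le> pnorm p2 x" unfolding pnorm_def by simp
    have N2le: "pnorm p2 x \<le> 1 / A2" using x2 A1pos by (simp add: field_simps)
    have "pnorm p1 x \<le> pnorm p2 x powr q" using norm_interp[OF xs assms(2,3)] unfolding q_def .
    also have "\<dots> \<le> (1 / A2) powr q" using N2 N2le q by (intro powr_mono2) auto
    also have "\<dots> = 1 / A2 powr q" using A1pos by (simp add: powr_divide)
    also have "\<dots> \<le> 1 / A1" using key A1pos by (intro divide_left_mono) auto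
    finally have "A1 * pnorm p1 x \<le> 1" using A1pos by (simp add: field_simps)
    then show "x \<in> Yset \<epsilon> p1" using xs unfolding Yset_def A1_def by simp
  qed
  define c where "c = (1 / A1) powr (1 / q)"
  have cpos: "0 < c" unfolding c_def using A1pos by simp
  have cq: "c powr q = 1 / A1" unfolding c_def using A1pos q by (simp add: powr_powr)
  have cgt: "1 / A2 < c"
  proof (rule ccontr)
    assume "\<not> 1 / A2 < c"
    then have "c powr q \<le> (1 / A2) powr q" using cpos q by (intro powr_mono2) auto
    also have "\<dots> = 1 / A2 powr q" using A1pos by (simp add: powr_divide)
    also have "\<dots> < 1 / A1" using key A1pos by (intro divide_strict_left_mono) auto
    finally show False using cq by simp
  qed
  have cle1: "c \<le> 1"
  proof -
    have "c \<le> 1 powr (1 / q)" unfolding c_def using A1ge A1pos q by (intro powr_mono2) auto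
    then show ?thesis by simp
  qed
  have cge: "d powr (- s2) \<le> c"
  proof -
    have "d powr (- s1) \<le> 1 / A1" using A1le A1pos d by (simp add: powr_minus field_simps)
    then have "(d powr (- s1)) powr (1 / q) \<le> c" unfolding c_def using q by (intro powr_mono2) auto
    moreover have "(d powr (- s1)) powr (1 / q) = d powr (- s2)"
      using q qs by (simp add: powr_powr field_simps flip: qs)
    ultimately show ?thesis by simp
  qed
  obtain i0 :: 'n where True by simp
  define e :: "'n \<Rightarrow> real" where "e i = (if i = i0 then 1 else 0)" for i
  define v :: "real \<Rightarrow> real^'n" where "v l = (\<chi> i. (1 - l) / d + l * e i)" for l
  define f where "f l = (\<Sum>i\<in>UNIV. ((1 - l) / d + l * e i) ^ p2)" for l
  have cont: "continuous_on {0..1} f" unfolding f_def using d by (intro continuous_intros) auto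
  have sume: "(\<Sum>i\<in>UNIV. e i) = 1" unfolding e_def by simp
  have e01: "e i ^ p2 = e i" for i using assms unfolding e_def by simp
  have f1: "f 1 = 1" unfolding f_def using e01 sume by simp
  have f0: "f 0 = d * (1 / d) ^ p2" unfolding f_def d_def by simp
  have "f 0 = d powr (1 - real p2)"
    using d unfolding f0 by (simp add: powr_diff powr_realpow power_one_over divide_inverse power_inverse)
  also have "\<dots> = (d powr (- s2)) powr real p2"
  proof -
    have "- s2 * real p2 = 1 - real p2" using p12 p1 unfolding s2_def by (simp add: field_simps)
    then show ?thesis by (simp add: powr_powr)
  qed
  also have "\<dots> \<le> c powr real p2" using cge d by (intro powr_mono2) auto
  also have "\<dots> = c ^ p2" using cpos by (simp add: powr_realpow)
  finally have f0le: "f 0 \<le> c ^ p2" .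
  have "c ^ p2 \<le> 1" using cle1 cpos by (simp add: power_le_one)
  then obtain l where l: "0 \<le> l" "l \<le> 1" "f l = c ^ p2"
    using IVT'[of f 0 "c ^ p2" 1] f0le f1 cont by auto
  have vs: "v l \<in> prob_simplex"
  proof -
    have "\<forall>i. 0 \<le> v l $ i" unfolding v_def e_def using l d by auto
    moreover have "(\<Sum>i\<in>UNIV. v l $ i) = 1"
    proof -
      have "(\<Sum>i\<in>UNIV. v l $ i) = (\<Sum>i\<in>(UNIV::'n set). (1 - l) / d) + l * (\<Sum>i\<in>UNIV. e i)"
        unfolding v_def by (simp add: sum.distrib sum_distrib_left)
      also have "\<dots> = 1" using d sume unfolding d_def by simp
      finally show ?thesis .
    qed
    ultimately show ?thesis unfolding prob_simplex_def by simp
  qed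
  have pv: "pnorm p2 (v l) = c"
  proof -
    have "pnorm p2 (v l) = (c ^ p2) powr (1 / real p2)"
      unfolding pnorm_def using l(3) unfolding f_def v_def by simp
    also have "\<dots> = c" using cpos p12 p1 by (simp add: powr_realpow[symmetric] powr_powr)
    finally show ?thesis .
  qed
  have "v l \<in> Yset \<epsilon> p1"
  proof -
    have "pnorm p1 (v l) \<le> pnorm p2 (v l) powr q" using norm_interp[OF vs assms(2,3)] unfolding q_def .
    then have "A1 * pnorm p1 (v l) \<le> A1 * (1 / A1)" using pv cq A1pos by (intro mult_left_mono) auto
    then show ?thesis using vs A1pos unfolding Yset_def A1_def by simp
  qed
  moreover have "v l \<notin> Yset \<epsilon> p2"
  proof
    assume "v l \<in> Yset \<epsilon> p2"
    then have "A2 * c \<le> 1" using pv unfolding Yset_def A2_def by simp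
    then show False using cgt A1pos by (simp add: field_simps)
  qed
  ultimately show ?thesis using sub by blast
qed

end
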